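(* Let $A$ be a commutative noetherian local ring, let $x,y\in A$ be an exact pair of zero divisors, and let $a\in A$. Then there is an isomorphism of $A$-algebras $\operatorname{End}_A(G_a)^{\mathrm{op}}\cong\operatorname{End}_A(H_a)$. In particular, $G_a$ is indecomposable if and only if $H_a$ is indecomposable.
   Context: Two non-units $x,y\in A$ form an exact pair of zero divisors if $\operatorname{Ann}_A(x)=(y)$ and $\operatorname{Ann}_A(y)=(x)$. For $a\in A$, let $\gamma_a=\begin{pmatrix} x & a\\ 0 & y\end{pmatrix}$ and $\eta_a=\begin{pmatrix} y & -a\\ 0 & x\end{pmatrix}$, viewed as $A$-linear maps $A^2\to A^2$ acting on column vectors, and set $G_a=\operatorname{Coker}\gamma_a$, $H_a=\operatorname{Coker}\eta_a$. *)

theory Defs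
  imports Main "HOL-Library.Product_Plus"
begin

definition is_ideal :: "'a::comm_ring_1 set \<Rightarrow> bool" where
  "is_ideal I \<longleftrightarrow> 0 \<in> I \<and> (\<forall>u\<in>I. \<forall>v\<in>I. u + v \<in> I) \<and> (\<forall>r. \<forall>u\<in>I. r * u \<in> I)"

definition ideal_gen :: "'a::comm_ring_1 set \<Rightarrow> 'a set" where
  "ideal_gen F = {\<Sum>f\<in>F. c f * f | c. True}"

definition noetherian_ring :: "'a::comm_ring_1 itself \<Rightarrow> bool" where
  "noetherian_ring _ \<longleftrightarrow>
     (\<forall>I::'a set. is_ideal I \<longrightarrow> (\<exists>F. finite F \<and> F \<subseteq> I \<and> I = ideal_gen F))"

definition maximal_ideal :: "'a::comm_ring_1 set \<Rightarrow> bool" where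
  "maximal_ideal m \<longleftrightarrow> is_ideal m \<and> m \<noteq> UNIV \<and>
     (\<forall>J. is_ideal J \<and> m \<subseteq> J \<longrightarrow> J = m \<or> J = UNIV)"

definition local_ring :: "'a::comm_ring_1 itself \<Rightarrow> bool" where
  "local_ring _ \<longleftrightarrow> (\<exists>!m::'a set. maximal_ideal m)"

definition Ann :: "'a::comm_ring_1 \<Rightarrow> 'a set" where
  "Ann x = {z. z * x = 0}"

definition principal_ideal :: "'a::comm_ring_1 \<Rightarrow> 'a set" where
  "principal_ideal y = {r * y | r. True}"

definition exact_pair :: "'a::comm_ring_1 \<Rightarrow> 'a \<Rightarrow> bool" where
  "exact_pair x y \<longleftrightarrow> \<not> x dvd 1 \<and> \<not> y dvd 1 \<and>
     Ann x = principal_ideal y \<and> Ann y = principal_ideal x"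

definition vsmul :: "'a::comm_ring_1 \<Rightarrow> 'a \<times> 'a \<Rightarrow> 'a \<times> 'a" where
  "vsmul r v = (r * fst v, r * snd v)"

text \<open>gamma_a = [[x, a],[0, y]] acting on column vectors (u,v).\<close>
definition gamma_map :: "'a::comm_ring_1 \<Rightarrow> 'a \<Rightarrow> 'a \<Rightarrow> 'a \<times> 'a \<Rightarrow> 'a \<times> 'a" where
  "gamma_map x y a v = (x * fst v + a * snd v, y * snd v)"

text \<open>eta_a = [[y, -a],[0, x]].\<close>
definition eta_map :: "'a::comm_ring_1 \<Rightarrow> 'a \<Rightarrow> 'a \<Rightarrow> 'a \<times> 'a \<Rightarrow> 'a \<times> 'a" where
  "eta_map x y a v = (y * fst v - a * snd v, x * snd v)"

section \<open>Cokernel A^2 / N as the module of cosets of a submodule N\<close>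

definition coset :: "('a::comm_ring_1 \<times> 'a) set \<Rightarrow> 'a \<times> 'a \<Rightarrow> ('a \<times> 'a) set" where
  "coset N v = (\<lambda>n. v + n) ` N"

definition coker :: "('a::comm_ring_1 \<times> 'a) set \<Rightarrow> ('a \<times> 'a) set set" where
  "coker N = range (coset N)"

definition cadd :: "('a::comm_ring_1 \<times> 'a) set \<Rightarrow> ('a \<times> 'a) set \<Rightarrow> ('a \<times> 'a) set \<Rightarrow> ('a \<times> 'a) set" where
  "cadd N S T = {s + t | s t. s \<in> S \<and> t \<in> T}"

definition csmul :: "('a::comm_ring_1 \<times> 'a) set \<Rightarrow> 'a \<Rightarrow> ('a \<times> 'a) set \<Rightarrow> ('a \<times> 'a) set" where
  "csmul N r S = {vsmul r s + n | s n. s \<in> S \<and> n \<in> N}"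

definition czero :: "('a::comm_ring_1 \<times> 'a) set \<Rightarrow> ('a \<times> 'a) set" where
  "czero N = coset N 0"

text \<open>G_a and H_a: cokernels of gamma_a and eta_a.\<close>
definition G_mod :: "'a::comm_ring_1 \<Rightarrow> 'a \<Rightarrow> 'a \<Rightarrow> ('a \<times> 'a) set" where
  "G_mod x y a = range (gamma_map x y a)"

definition H_mod :: "'a::comm_ring_1 \<Rightarrow> 'a \<Rightarrow> 'a \<Rightarrow> ('a \<times> 'a) set" where
  "H_mod x y a = range (eta_map x y a)"

type_synonym 'a cset = "('a \<times> 'a) set"

definition End_mod :: "('a::comm_ring_1 \<times> 'a) set \<Rightarrow> ('a cset \<Rightarrow> 'a cset) set" where
  "End_mod N = {f. (\<forall>S\<in>coker N. f S \<in> coker N)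
      \<and> (\<forall>S. S \<notin> coker N \<longrightarrow> f S = undefined)
      \<and> (\<forall>S\<in>coker N. \<forall>T\<in>coker N. f (cadd N S T) = cadd N (f S) (f T))
      \<and> (\<forall>r. \<forall>S\<in>coker N. f (csmul N r S) = csmul N r (f S))}"

definition end_comp :: "('a::comm_ring_1 \<times> 'a) set \<Rightarrow> ('a cset \<Rightarrow> 'a cset) \<Rightarrow> ('a cset \<Rightarrow> 'a cset) \<Rightarrow> ('a cset \<Rightarrow> 'a cset)" where
  "end_comp N f g = (\<lambda>S. if S \<in> coker N then f (g S) else undefined)"

definition end_add :: "('a::comm_ring_1 \<times> 'a) set \<Rightarrow> ('a cset \<Rightarrow> 'a cset) \<Rightarrow> ('a cset \<Rightarrow> 'a cset) \<Rightarrow> ('a cset \<Rightarrow> 'a cset)" where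
  "end_add N f g = (\<lambda>S. if S \<in> coker N then cadd N (f S) (g S) else undefined)"

definition end_smul :: "('a::comm_ring_1 \<times> 'a) set \<Rightarrow> 'a \<Rightarrow> ('a cset \<Rightarrow> 'a cset) \<Rightarrow> ('a cset \<Rightarrow> 'a cset)" where
  "end_smul N r f = (\<lambda>S. if S \<in> coker N then csmul N r (f S) else undefined)"

definition end_id :: "('a::comm_ring_1 \<times> 'a) set \<Rightarrow> ('a cset \<Rightarrow> 'a cset)" where
  "end_id N = (\<lambda>S. if S \<in> coker N then S else undefined)"

definition end_op_iso :: "('a::comm_ring_1 \<times> 'a) set \<Rightarrow> ('a \<times> 'a) set \<Rightarrow> bool" where
  "end_op_iso N M \<longleftrightarrow> (\<exists>\<Phi>. bij_betw \<Phi> (End_mod N) (End_mod M)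
      \<and> (\<forall>f\<in>End_mod N. \<forall>g\<in>End_mod N. \<Phi> (end_comp N f g) = end_comp M (\<Phi> g) (\<Phi> f))
      \<and> (\<forall>f\<in>End_mod N. \<forall>g\<in>End_mod N. \<Phi> (end_add N f g) = end_add M (\<Phi> f) (\<Phi> g))
      \<and> (\<forall>r. \<forall>f\<in>End_mod N. \<Phi> (end_smul N r f) = end_smul M r (\<Phi> f))
      \<and> \<Phi> (end_id N) = end_id M)"

definition is_submod :: "('a::comm_ring_1 \<times> 'a) set \<Rightarrow> 'a cset set \<Rightarrow> bool" where
  "is_submod N P \<longleftrightarrow> P \<subseteq> coker N \<and> czero N \<in> P
     \<and> (\<forall>S\<in>P. \<forall>T\<in>P. cadd N S T \<in> P) \<and> (\<forall>r. \<forall>S\<in>P. csmul N r S \<in> P)"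

definition indecomposable :: "('a::comm_ring_1 \<times> 'a) set \<Rightarrow> bool" where
  "indecomposable N \<longleftrightarrow> coker N \<noteq> {czero N}
     \<and> (\<forall>P Q. is_submod N P \<and> is_submod N Q \<and> P \<inter> Q = {czero N}
            \<and> {cadd N S T | S T. S \<in> P \<and> T \<in> Q} = coker N
            \<longrightarrow> P = {czero N} \<or> Q = {czero N})"

end

theory Submission
  imports Defs
begin


lemma prod_eqI2: "fst u = fst v \<Longrightarrow> snd u = snd v \<Longrightarrow> u = v" by (simp add: prod_eq_iff)

definition submod :: "('a::comm_ring_1 \<times> 'a) set \<Rightarrow> bool" where
  "submod N \<longleftrightarrow> 0 \<in> N \<and> (\<forall>u\<in>N. \<forall>v\<in>N. u + v \<in> N) \<and> (\<forall>r u. u \<in> N \<longrightarrow> vsmul r u \<in> N)"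

lemma vsmul_add: "vsmul r (u + v) = vsmul r u + vsmul r v"
  by (simp add: vsmul_def algebra_simps)
lemma vsmul_diff: "vsmul r (u - v) = vsmul r u - vsmul r v"
  by (simp add: vsmul_def algebra_simps)
lemma vsmul_0[simp]: "vsmul 0 v = 0" by (simp add: vsmul_def zero_prod_def)
lemma vsmul_m1: "vsmul (-1) v = - v" by (simp add: vsmul_def prod_eq_iff)
lemma vsmul_zero[simp]: "vsmul r 0 = 0" by (simp add: vsmul_def zero_prod_def)

context fixes N :: "('a::comm_ring_1 \<times> 'a) set" assumes sm: "submod N"
begin
lemma sm0: "0 \<in> N" using sm by (simp add: submod_def)
lemma smadd: "u \<in> N \<Longrightarrow> v \<in> N \<Longrightarrow> u + v \<in> N" using sm by (simp add: submod_def)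
lemma smsmul: "u \<in> N \<Longrightarrow> vsmul r u \<in> N" using sm unfolding submod_def by blast
lemma smneg: "u \<in> N \<Longrightarrow> - u \<in> N" using smsmul[of u "-1"] by (simp add: vsmul_m1)
lemma smdiff: "u \<in> N \<Longrightarrow> v \<in> N \<Longrightarrow> u - v \<in> N"
  using smadd[of u "-v"] smneg[of v] by simp

lemma mem_coset: "w \<in> coset N v \<longleftrightarrow> w - v \<in> N"
  unfolding coset_def by (auto simp: image_iff intro!: bexI[of _ "w - v"])

lemma coset_eq: "coset N v = coset N w \<longleftrightarrow> v - w \<in> N"
proof
  assume "coset N v = coset N w"
  then have "v \<in> coset N w" using mem_coset[of v v] sm0 by simp
  then show "v - w \<in> N" by (simp add: mem_coset)
next
  assume h: "v - w \<in> N"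
  show "coset N v = coset N w"
  proof (rule set_eqI)
    fix z
    have "z - v \<in> N \<longleftrightarrow> z - w \<in> N"
    proof
      assume "z - v \<in> N" then have "(z - v) + (v - w) \<in> N" using h smadd by blast
      then show "z - w \<in> N" by (simp add: algebra_simps)
    next
      assume "z - w \<in> N" then have "(z - w) - (v - w) \<in> N" using h smdiff by blast
      then show "z - v \<in> N" by (simp add: algebra_simps)
    qed
    then show "z \<in> coset N v \<longleftrightarrow> z \<in> coset N w" by (simp add: mem_coset)
  qed
qed

lemma cadd_coset: "cadd N (coset N v) (coset N w) = coset N (v + w)"
proof (rule set_eqI)
  fix z
  show "z \<in> cadd N (coset N v) (coset N w) \<longleftrightarrow> z \<in> coset N (v + w)"
  proof
    assume "z \<in> cadd N (coset N v) (coset N w)"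
    then obtain s t where "z = s + t" "s - v \<in> N" "t - w \<in> N"
      by (auto simp: cadd_def mem_coset)
    then have "(s - v) + (t - w) \<in> N" using smadd by blast
    then show "z \<in> coset N (v + w)" using \<open>z = s + t\<close> by (simp add: mem_coset algebra_simps)
  next
    assume "z \<in> coset N (v + w)"
    then have "(z - w) - v \<in> N" by (simp add: mem_coset algebra_simps)
    moreover have "w - w \<in> N" using sm0 by simp
    ultimately show "z \<in> cadd N (coset N v) (coset N w)"
      unfolding cadd_def mem_coset by (intro CollectI exI[of _ "z - w"] exI[of _ w]) simp
  qed
qed

lemma csmul_coset: "csmul N r (coset N v) = coset N (vsmul r v)"
proof (rule set_eqI)
  fix z
  show "z \<in> csmul N r (coset N v) \<longleftrightarrow> z \<in> coset N (vsmul r v)"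
  proof
    assume "z \<in> csmul N r (coset N v)"
    then obtain s n where "z = vsmul r s + n" "s - v \<in> N" "n \<in> N"
      by (auto simp: csmul_def mem_coset)
    then have "vsmul r (s - v) + n \<in> N" using smadd smsmul by blast
    then show "z \<in> coset N (vsmul r v)" using \<open>z = _\<close> by (simp add: mem_coset vsmul_diff algebra_simps)
  next
    assume "z \<in> coset N (vsmul r v)"
    then have "z - vsmul r v \<in> N" by (simp add: mem_coset)
    moreover have "v - v \<in> N" using sm0 by simp
    ultimately show "z \<in> csmul N r (coset N v)"
      unfolding csmul_def mem_coset by (intro CollectI exI[of _ v] exI[of _ "z - vsmul r v"]) simp
  qed
qed

lemma coker_iff: "S \<in> coker N \<longleftrightarrow> (\<exists>v. S = coset N v)"
  by (auto simp: coker_def)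

lemma coset_in[simp]: "coset N v \<in> coker N" by (simp add: coker_def)

end


datatype 'a m2 = M2 'a 'a 'a 'a

fun app :: "'a::comm_ring_1 m2 \<Rightarrow> 'a \<times> 'a \<Rightarrow> 'a \<times> 'a" where
  "app (M2 p q r s) v = (p * fst v + q * snd v, r * fst v + s * snd v)"
fun mmul :: "'a::comm_ring_1 m2 \<Rightarrow> 'a m2 \<Rightarrow> 'a m2" where
  "mmul (M2 a b c d) (M2 e f g h) = M2 (a*e + b*g) (a*f + b*h) (c*e + d*g) (c*f + d*h)"
fun madd :: "'a::comm_ring_1 m2 \<Rightarrow> 'a m2 \<Rightarrow> 'a m2" where
  "madd (M2 a b c d) (M2 e f g h) = M2 (a+e) (b+f) (c+g) (d+h)"
fun msub :: "'a::comm_ring_1 m2 \<Rightarrow> 'a m2 \<Rightarrow> 'a m2" where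
  "msub (M2 a b c d) (M2 e f g h) = M2 (a-e) (b-f) (c-g) (d-h)"
fun msmul :: "'a::comm_ring_1 \<Rightarrow> 'a m2 \<Rightarrow> 'a m2" where
  "msmul r (M2 a b c d) = M2 (r*a) (r*b) (r*c) (r*d)"
fun adj :: "'a::comm_ring_1 m2 \<Rightarrow> 'a m2" where
  "adj (M2 a b c d) = M2 d (-b) (-c) a"
definition mI :: "'a::comm_ring_1 m2" where "mI = M2 1 0 0 1"
definition m0 :: "'a::comm_ring_1 m2" where "m0 = M2 0 0 0 0"

lemma app_mmul: "app (mmul A B) v = app A (app B v)"
  by (cases A; cases B) (simp add: algebra_simps)
lemma app_madd: "app (madd A B) v = app A v + app B v"
  by (cases A; cases B) (simp add: algebra_simps)
lemma app_msub: "app (msub A B) v = app A v - app B v"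
  by (cases A; cases B) (simp add: algebra_simps)
lemma app_msmul: "app (msmul r A) v = vsmul r (app A v)"
  by (cases A) (simp add: algebra_simps vsmul_def)
lemma app_mI: "app mI v = v" by (simp add: mI_def)
lemma app_add: "app A (u + v) = app A u + app A v"
  by (cases A) (simp add: algebra_simps)
lemma app_diff: "app A (u - v) = app A u - app A v"
  by (cases A) (simp add: algebra_simps)
lemma app_vsmul: "app A (vsmul r v) = vsmul r (app A v)"
  by (cases A) (simp add: algebra_simps vsmul_def)
lemma app_zero[simp]: "app A 0 = 0"
  by (cases A) (simp add: zero_prod_def)

lemma adj_adj[simp]: "adj (adj A) = A" by (cases A) simp
lemma adj_mmul: "adj (mmul A B) = mmul (adj B) (adj A)"
  by (cases A; cases B) (simp add: algebra_simps)
lemma adj_madd: "adj (madd A B) = madd (adj A) (adj B)"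
  by (cases A; cases B) (simp add: algebra_simps)
lemma adj_msub: "adj (msub A B) = msub (adj A) (adj B)"
  by (cases A; cases B) (simp add: algebra_simps)
lemma adj_msmul: "adj (msmul r A) = msmul r (adj A)"
  by (cases A) (simp add: algebra_simps)
lemma adj_mI: "adj mI = mI" by (simp add: mI_def)
lemma adj_m0: "adj m0 = m0" by (simp add: m0_def)
lemma mmul_assoc: "mmul (mmul A B) C = mmul A (mmul B C)"
  by (cases A; cases B; cases C) (simp add: algebra_simps)
lemma mmul_madd: "mmul A (madd B C) = madd (mmul A B) (mmul A C)"
  by (cases A; cases B; cases C) (simp add: algebra_simps)
lemma madd_mmul: "mmul (madd B C) A = madd (mmul B A) (mmul C A)"
  by (cases A; cases B; cases C) (simp add: algebra_simps)
lemma mmul_msub: "mmul A (msub B C) = msub (mmul A B) (mmul A C)"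
  by (cases A; cases B; cases C) (simp add: algebra_simps)
lemma msub_mmul: "mmul (msub B C) A = msub (mmul B A) (mmul C A)"
  by (cases A; cases B; cases C) (simp add: algebra_simps)
lemma mmul_msmul: "mmul A (msmul r B) = msmul r (mmul A B)"
  by (cases A; cases B) (simp add: algebra_simps)
lemma msmul_mmul: "mmul (msmul r B) A = msmul r (mmul B A)"
  by (cases A; cases B) (simp add: algebra_simps)
lemma mmul_mI: "mmul A mI = A" by (cases A) (simp add: mI_def)
lemma mI_mmul: "mmul mI A = A" by (cases A) (simp add: mI_def)
lemma mmul_m0: "mmul A m0 = m0" by (cases A) (simp add: m0_def)
lemma m0_mmul: "mmul m0 A = m0" by (cases A) (simp add: m0_def)
lemma msub_self: "msub A A = m0" by (cases A) (simp add: m0_def)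
lemma msub_eq: "msub A B = m0 \<longleftrightarrow> A = B" by (cases A; cases B) (simp add: m0_def)

lemma mat_ext: assumes "\<And>v. app A v = app B v" shows "A = B"
proof -
  have "app A (1,0) = app B (1,0)" "app A (0,1) = app B (0,1)" using assms by auto
  then show ?thesis by (cases A; cases B) simp
qed

lemma range_mat: "(\<forall>v. app X v \<in> range (app M)) \<longleftrightarrow> (\<exists>R. X = mmul M R)"
proof
  assume h: "\<forall>v. app X v \<in> range (app M)"
  obtain w1 where w1: "app X (1,0) = app M w1" using h by blast
  obtain w2 where w2: "app X (0,1) = app M w2" using h by blast
  have "X = mmul M (M2 (fst w1) (fst w2) (snd w1) (snd w2))"
    using w1 w2 by (cases X; cases M) (simp add: algebra_simps)
  then show "\<exists>R. X = mmul M R" ..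
next
  assume "\<exists>R. X = mmul M R"
  then obtain R where "X = mmul M R" ..
  then show "\<forall>v. app X v \<in> range (app M)" by (simp add: app_mmul)
qed


definition stab :: "('a::comm_ring_1 \<times> 'a) set \<Rightarrow> 'a m2 \<Rightarrow> bool" where
  "stab N P \<longleftrightarrow> (\<forall>v\<in>N. app P v \<in> N)"

lemma stab_range: "stab (range (app M)) P \<longleftrightarrow> (\<exists>Q. mmul P M = mmul M Q)"
proof -
  have "stab (range (app M)) P \<longleftrightarrow> (\<forall>v. app (mmul P M) v \<in> range (app M))"
    by (auto simp: stab_def app_mmul)
  also have "\<dots> \<longleftrightarrow> (\<exists>Q. mmul P M = mmul M Q)" by (rule range_mat)
  finally show ?thesis .
qed

definition endo :: "('a::comm_ring_1 \<times> 'a) set \<Rightarrow> 'a m2 \<Rightarrow> 'a cset \<Rightarrow> 'a cset" where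
  "endo N P = (\<lambda>S. if S \<in> coker N then coset N (app P (SOME v. S = coset N v)) else undefined)"

context fixes N :: "('a::comm_ring_1 \<times> 'a) set" assumes sm: "submod N"
begin

lemma endo_coset: assumes "stab N P" shows "endo N P (coset N v) = coset N (app P v)"
proof -
  define w where "w = (SOME w. coset N v = coset N w)"
  have "coset N v = coset N w" unfolding w_def by (rule someI) (rule refl)
  then have "v - w \<in> N" using coset_eq[OF sm] by blast
  then have "app P (v - w) \<in> N" using assms by (simp add: stab_def)
  then have "coset N (app P w) = coset N (app P v)"
  proof -
    have "- app P (v - w) \<in> N" using smneg[OF sm] \<open>app P (v - w) \<in> N\<close> by blast
    then have "app P w - app P v \<in> N" by (simp add: app_diff)
    then show ?thesis using coset_eq[OF sm] by blast
  qed
  then show ?thesis unfolding endo_def w_def[symmetric] using coset_in[OF sm] by simp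
qed

lemma endo_out: "S \<notin> coker N \<Longrightarrow> endo N P S = undefined" by (simp add: endo_def)

lemma endo_in: assumes st: "stab N P" shows "endo N P \<in> End_mod N"
proof -
  have A: "\<forall>S\<in>coker N. endo N P S \<in> coker N"
  proof
    fix S assume "S \<in> coker N"
    then obtain v where "S = coset N v" using coker_iff[OF sm] by blast
    then show "endo N P S \<in> coker N" by (simp add: endo_coset[OF st] coset_in[OF sm])
  qed
  have B: "\<forall>S\<in>coker N. \<forall>T\<in>coker N. endo N P (cadd N S T) = cadd N (endo N P S) (endo N P T)"
  proof (intro ballI)
    fix S T assume "S \<in> coker N" "T \<in> coker N"
    obtain v where "S = coset N v" using \<open>S \<in> coker N\<close> coker_iff[OF sm] by blast
    moreover obtain w where "T = coset N w" using \<open>T \<in> coker N\<close> coker_iff[OF sm] by blast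
    ultimately show "endo N P (cadd N S T) = cadd N (endo N P S) (endo N P T)"
      by (simp only: cadd_coset[OF sm] endo_coset[OF st] app_add)
  qed
  have C: "\<forall>r. \<forall>S\<in>coker N. endo N P (csmul N r S) = csmul N r (endo N P S)"
  proof (intro allI ballI)
    fix r S assume "S \<in> coker N"
    then obtain v where "S = coset N v" using coker_iff[OF sm] by blast
    then show "endo N P (csmul N r S) = csmul N r (endo N P S)"
      by (simp only: csmul_coset[OF sm] endo_coset[OF st] app_vsmul)
  qed
  show ?thesis unfolding End_mod_def using A B C by (simp add: endo_out)
qed

lemma End_ext: assumes "f \<in> End_mod N" "g \<in> End_mod N" "\<And>v. f (coset N v) = g (coset N v)"
  shows "f = g"
proof
  fix S show "f S = g S"
  proof (cases "S \<in> coker N")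
    case True then obtain v where "S = coset N v" using coker_iff[OF sm] by blast
    then show ?thesis using assms(3) by simp
  next
    case False then show ?thesis using assms(1,2) by (simp add: End_mod_def)
  qed
qed

lemma End_lift: assumes f: "f \<in> End_mod N" shows "\<exists>P. stab N P \<and> f = endo N P"
proof -
  have "f (coset N (1,0)) \<in> coker N" using f unfolding End_mod_def by (simp add: coset_in[OF sm])
  then obtain p1 where p1: "f (coset N (1,0)) = coset N p1" using coker_iff[OF sm] by blast
  have "f (coset N (0,1)) \<in> coker N" using f unfolding End_mod_def by (simp add: coset_in[OF sm])
  then obtain p2 where p2: "f (coset N (0,1)) = coset N p2" using coker_iff[OF sm] by blast
  define P where "P = M2 (fst p1) (fst p2) (snd p1) (snd p2)"
  have fv: "f (coset N v) = coset N (app P v)" for v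
  proof -
    have v: "v = vsmul (fst v) (1,0) + vsmul (snd v) (0,1)" by (simp add: vsmul_def)
    have "f (coset N v) = f (cadd N (csmul N (fst v) (coset N (1,0))) (csmul N (snd v) (coset N (0,1))))"
      by (subst v) (simp add: csmul_coset[OF sm] cadd_coset[OF sm])
    also have "\<dots> = cadd N (f (csmul N (fst v) (coset N (1,0)))) (f (csmul N (snd v) (coset N (0,1))))"
      using f unfolding End_mod_def by (simp add: csmul_coset[OF sm] coset_in[OF sm])
    also have "\<dots> = cadd N (csmul N (fst v) (coset N p1)) (csmul N (snd v) (coset N p2))"
      using f p1 p2 unfolding End_mod_def by (simp add: coset_in[OF sm])
    also have "\<dots> = coset N (app P v)"
      by (simp add: csmul_coset[OF sm] cadd_coset[OF sm] P_def vsmul_def algebra_simps)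
    finally show ?thesis .
  qed
  have f0: "f (coset N 0) = coset N 0"
  proof -
    have "f (coset N 0) = f (csmul N 0 (coset N 0))" by (simp add: csmul_coset[OF sm])
    also have "\<dots> = csmul N 0 (f (coset N 0))" using f unfolding End_mod_def by (simp add: coset_in[OF sm])
    also have "\<dots> = coset N 0" using fv by (simp add: csmul_coset[OF sm])
    finally show ?thesis .
  qed
  have st: "stab N P"
    unfolding stab_def
  proof
    fix n assume "n \<in> N"
    then have "coset N n = coset N 0" using coset_eq[OF sm] by simp
    then have "coset N (app P n) = coset N 0" using fv f0 by metis
    then show "app P n \<in> N" using coset_eq[OF sm] by simp
  qed
  have "f = endo N P"
    by (rule End_ext[OF f endo_in[OF st]]) (simp add: fv endo_coset[OF st])
  with st show ?thesis by blast
qed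

lemma endo_eq: assumes "stab N P1" "stab N P2"
  shows "endo N P1 = endo N P2 \<longleftrightarrow> (\<forall>v. app P1 v - app P2 v \<in> N)"
proof
  assume "endo N P1 = endo N P2"
  then have "coset N (app P1 v) = coset N (app P2 v)" for v
    by (metis endo_coset assms)
  then show "\<forall>v. app P1 v - app P2 v \<in> N" using coset_eq[OF sm] by blast
next
  assume h: "\<forall>v. app P1 v - app P2 v \<in> N"
  show "endo N P1 = endo N P2"
  proof (rule End_ext[OF endo_in[OF assms(1)] endo_in[OF assms(2)]])
    fix v
    have "app P1 v - app P2 v \<in> N" using h by blast
    then show "endo N P1 (coset N v) = endo N P2 (coset N v)"
      by (simp add: endo_coset assms coset_eq[OF sm])
  qed
qed

lemma stab_mmul: "stab N A \<Longrightarrow> stab N B \<Longrightarrow> stab N (mmul A B)"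
  by (simp add: stab_def app_mmul)
lemma stab_madd: "stab N A \<Longrightarrow> stab N B \<Longrightarrow> stab N (madd A B)"
  by (simp add: stab_def app_madd smadd[OF sm])
lemma stab_msmul: "stab N A \<Longrightarrow> stab N (msmul r A)"
  by (simp add: stab_def app_msmul smsmul[OF sm])
lemma stab_mI: "stab N mI" by (simp add: stab_def app_mI)

lemma endo_comp: assumes "stab N A" "stab N B"
  shows "end_comp N (endo N A) (endo N B) = endo N (mmul A B)"
proof (rule ext)
  fix S show "end_comp N (endo N A) (endo N B) S = endo N (mmul A B) S"
  proof (cases "S \<in> coker N")
    case True then obtain v where "S = coset N v" using coker_iff[OF sm] by blast
    then show ?thesis using assms by (simp add: end_comp_def endo_coset stab_mmul app_mmul coset_in[OF sm])
  next
    case False then show ?thesis by (simp add: end_comp_def endo_out)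
  qed
qed

lemma endo_add: assumes "stab N A" "stab N B"
  shows "end_add N (endo N A) (endo N B) = endo N (madd A B)"
proof (rule ext)
  fix S show "end_add N (endo N A) (endo N B) S = endo N (madd A B) S"
  proof (cases "S \<in> coker N")
    case True then obtain v where "S = coset N v" using coker_iff[OF sm] by blast
    then show ?thesis using assms by (simp add: end_add_def endo_coset stab_madd app_madd cadd_coset[OF sm] coset_in[OF sm])
  next
    case False then show ?thesis by (simp add: end_add_def endo_out)
  qed
qed

lemma endo_smul: assumes "stab N A"
  shows "end_smul N r (endo N A) = endo N (msmul r A)"
proof (rule ext)
  fix S show "end_smul N r (endo N A) S = endo N (msmul r A) S"
  proof (cases "S \<in> coker N")
    case True then obtain v where "S = coset N v" using coker_iff[OF sm] by blast
    then show ?thesis using assms by (simp add: end_smul_def endo_coset stab_msmul app_msmul csmul_coset[OF sm] coset_in[OF sm])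
  next
    case False then show ?thesis by (simp add: end_smul_def endo_out)
  qed
qed

lemma endo_id: assumes "True"
  shows "end_id N = endo N mI"
proof (rule ext)
  fix S show "end_id N S = endo N mI S"
  proof (cases "S \<in> coker N")
    case True then obtain v where "S = coset N v" using coker_iff[OF sm] by blast
    then show ?thesis using assms by (simp add: end_id_def endo_coset stab_mI app_mI coset_in[OF sm])
  next
    case False then show ?thesis by (simp add: end_id_def endo_out)
  qed
qed

lemma End_comp_closed: "f \<in> End_mod N \<Longrightarrow> g \<in> End_mod N \<Longrightarrow> end_comp N f g \<in> End_mod N"
  by (metis End_lift endo_comp endo_in stab_mmul)
lemma End_smul_closed: "f \<in> End_mod N \<Longrightarrow> end_smul N r f \<in> End_mod N"
  by (metis End_lift endo_smul endo_in stab_msmul)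
lemma End_add_closed: "f \<in> End_mod N \<Longrightarrow> g \<in> End_mod N \<Longrightarrow> end_add N f g \<in> End_mod N"
  by (metis End_lift endo_add endo_in stab_madd)
lemma End_id_in: "end_id N \<in> End_mod N"
  by (simp add: endo_id endo_in stab_mI)

end

lemma submod_range: "submod (range (app M))"
  unfolding submod_def
proof (intro conjI ballI allI impI)
  show "0 \<in> range (app M)" using app_zero[of M] by (metis rangeI)
next
  fix u v assume "u \<in> range (app M)" "v \<in> range (app M)"
  then obtain u' v' where "u = app M u'" "v = app M v'" by blast
  then have "u + v = app M (u' + v')" by (simp add: app_add)
  then show "u + v \<in> range (app M)" by blast
next
  fix r u assume "u \<in> range (app M)"
  then obtain u' where "u = app M u'" by blast
  then have "vsmul r u = app M (vsmul r u')" by (simp add: app_vsmul)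
  then show "vsmul r u \<in> range (app M)" by blast
qed


lemma app_m0: "app m0 v = 0" by (simp add: m0_def zero_prod_def)

locale exm =
  fixes M M' :: "'a::comm_ring_1 m2"
  assumes MM': "mmul M M' = m0" and M'M: "mmul M' M = m0"
    and adjM: "adj M = M'"
    and ker1: "\<And>v. app M v = 0 \<Longrightarrow> \<exists>w. v = app M' w"
    and ker2: "\<And>v. app M' v = 0 \<Longrightarrow> \<exists>w. v = app M w"
begin

lemma adjM': "adj M' = M" using adjM by auto

lemma sym: "exm M' M"
  proof
  show "mmul M' M = m0" "mmul M M' = m0" "adj M' = M" by (fact M'M, fact MM', fact adjM')
  show "\<exists>w. v = app M w" if "app M' v = 0" for v using ker2 that by blast
  show "\<exists>w. v = app M' w" if "app M v = 0" for v using ker1 that by blast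
qed

abbreviation "NN \<equiv> range (app M)"
abbreviation "NN' \<equiv> range (app M')"

lemma col1: assumes "mmul M X = m0" shows "\<exists>R. X = mmul M' R"
proof -
  have "\<forall>v. app X v \<in> NN'"
  proof
    fix v
    have "app M (app X v) = 0" by (simp add: app_mmul[symmetric] assms app_m0)
    then show "app X v \<in> NN'" using ker1 by blast
  qed
  then show ?thesis using range_mat by blast
qed

lemma col2: assumes "mmul M' X = m0" shows "\<exists>R. X = mmul M R"
proof -
  have "\<forall>v. app X v \<in> NN"
  proof
    fix v
    have "app M' (app X v) = 0" by (simp add: app_mmul[symmetric] assms app_m0)
    then show "app X v \<in> NN" using ker2 by blast
  qed
  then show ?thesis using range_mat by blast
qed

lemma row1: assumes "mmul X M' = m0" shows "\<exists>R. X = mmul R M"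
proof -
  have "mmul M (adj X) = m0" using arg_cong[OF assms, of adj]
    by (simp add: adj_mmul adjM' adj_m0)
  then obtain R where "adj X = mmul M' R" using col1 by blast
  then have "X = adj (mmul M' R)" by (metis adj_adj)
  then have "X = mmul (adj R) M" by (simp add: adj_mmul adjM')
  then show ?thesis by blast
qed

lemma row2: assumes "mmul X M = m0" shows "\<exists>R. X = mmul R M'"
proof -
  have "mmul M' (adj X) = m0" using arg_cong[OF assms, of adj]
    by (simp add: adj_mmul adjM adj_m0)
  then obtain R where "adj X = mmul M R" using col2 by blast
  then have "X = adj (mmul M R)" by (metis adj_adj)
  then have "X = mmul (adj R) M'" by (simp add: adj_mmul adjM)
  then show ?thesis by blast
qed

lemma existsP': assumes "stab NN P" shows "\<exists>P'. mmul M' P = mmul P' M'"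
proof -
  obtain Q where Q: "mmul P M = mmul M Q" using assms stab_range by blast
  have "mmul (mmul M' P) M = m0"
    by (simp add: mmul_assoc Q) (simp add: mmul_assoc[symmetric] M'M m0_mmul)
  then show ?thesis using row2 by blast
qed

lemma stab_adj: assumes "mmul M' P = mmul P' M'" shows "stab NN' (adj P')"
proof -
  have "mmul (mmul M P') M' = m0"
    by (simp add: mmul_assoc assms[symmetric]) (simp add: mmul_assoc[symmetric] MM' m0_mmul)
  then obtain R where R: "mmul M P' = mmul R M" using row1 by blast
  have "mmul (adj P') M' = mmul M' (adj R)"
    using arg_cong[OF R, of adj] by (simp add: adj_mmul adjM)
  then show ?thesis using stab_range by blast
qed

definition Phi :: "('a cset \<Rightarrow> 'a cset) \<Rightarrow> ('a cset \<Rightarrow> 'a cset)" where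
  "Phi f = endo NN' (adj (SOME P'. \<exists>P. stab NN P \<and> f = endo NN P \<and> mmul M' P = mmul P' M'))"

lemma Phi_endo: assumes st: "stab NN P" and P': "mmul M' P = mmul P' M'"
  shows "Phi (endo NN P) = endo NN' (adj P')"
proof -
  define P0' where "P0' = (SOME P'. \<exists>P0. stab NN P0 \<and> endo NN P = endo NN P0 \<and> mmul M' P0 = mmul P' M')"
  have "\<exists>P0. stab NN P0 \<and> endo NN P = endo NN P0 \<and> mmul M' P0 = mmul P0' M'"
    unfolding P0'_def by (rule someI[of _ P']) (use st P' in blast)
  then obtain P0 where st0: "stab NN P0" and e0: "endo NN P = endo NN P0"
    and P0': "mmul M' P0 = mmul P0' M'" by blast
  have "\<forall>v. app (msub P P0) v \<in> NN"
    using e0 endo_eq[OF submod_range st st0] by (simp add: app_msub)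
  then obtain R where R: "msub P P0 = mmul M R" using range_mat by blast
  have "mmul (msub P' P0') M' = mmul M' (msub P P0)"
    by (simp add: msub_mmul mmul_msub P' P0')
  also have "\<dots> = m0" by (simp add: R mmul_assoc[symmetric] M'M m0_mmul)
  finally obtain R2 where R2: "msub P' P0' = mmul R2 M" using row1 by blast
  have D: "msub (adj P') (adj P0') = mmul M' (adj R2)"
    using arg_cong[OF R2, of adj] by (simp add: adj_mmul adj_msub adjM)
  have "endo NN' (adj P') = endo NN' (adj P0')"
    by (subst endo_eq[OF submod_range stab_adj[OF P'] stab_adj[OF P0']])
       (metis D app_msub app_mmul rangeI)
  then show ?thesis unfolding Phi_def P0'_def by simp
qed

end


context exm begin

lemma lift: assumes "f \<in> End_mod NN"
  obtains P P' where "stab NN P" "f = endo NN P" "mmul M' P = mmul P' M'"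
    "Phi f = endo NN' (adj P')"
proof -
  obtain P where st: "stab NN P" and fP: "f = endo NN P"
    using End_lift[OF submod_range assms] by blast
  obtain P' where P': "mmul M' P = mmul P' M'" using existsP'[OF st] by blast
  show ?thesis using that[OF st fP P'] Phi_endo[OF st P'] fP by simp
qed

lemma Phi_in: assumes "f \<in> End_mod NN" shows "Phi f \<in> End_mod NN'"
proof -
  obtain P P' where "stab NN P" "f = endo NN P" and P': "mmul M' P = mmul P' M'"
    and Pf: "Phi f = endo NN' (adj P')" using lift[OF assms] by blast
  show ?thesis unfolding Pf by (rule endo_in[OF submod_range stab_adj[OF P']])
qed

lemma Phi_inv: assumes "f \<in> End_mod NN" shows "exm.Phi M' M (Phi f) = f"
proof -
  interpret s: exm M' M by (rule sym)
  obtain P P' where st: "stab NN P" and fP: "f = endo NN P" and P': "mmul M' P = mmul P' M'"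
    and Pf: "Phi f = endo NN' (adj P')" using lift[OF assms] by blast
  have e: "mmul M (adj P') = mmul (adj P) M"
    using arg_cong[OF P', of adj] by (simp add: adj_mmul adjM') 
  have "s.Phi (endo NN' (adj P')) = endo NN (adj (adj P))"
    by (rule s.Phi_endo[OF stab_adj[OF P'] e])
  then show ?thesis using Pf fP by simp
qed

lemma Phi_comp: assumes "f \<in> End_mod NN" "g \<in> End_mod NN"
  shows "Phi (end_comp NN f g) = end_comp NN' (Phi g) (Phi f)"
proof -
  obtain P1 P1' where s1: "stab NN P1" and f1: "f = endo NN P1" and e1: "mmul M' P1 = mmul P1' M'"
    and p1: "Phi f = endo NN' (adj P1')" using lift[OF assms(1)] by blast
  obtain P2 P2' where s2: "stab NN P2" and f2: "g = endo NN P2" and e2: "mmul M' P2 = mmul P2' M'"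
    and p2: "Phi g = endo NN' (adj P2')" using lift[OF assms(2)] by blast
  have e: "mmul M' (mmul P1 P2) = mmul (mmul P1' P2') M'"
    by (simp add: mmul_assoc[symmetric] e1) (simp add: mmul_assoc e2)
  have "Phi (end_comp NN f g) = endo NN' (adj (mmul P1' P2'))"
    unfolding f1 f2 endo_comp[OF submod_range s1 s2]
    by (rule Phi_endo[OF stab_mmul[OF submod_range s1 s2] e])
  also have "\<dots> = end_comp NN' (Phi g) (Phi f)"
    unfolding p1 p2 adj_mmul by (rule endo_comp[OF submod_range stab_adj[OF e2] stab_adj[OF e1], symmetric])
  finally show ?thesis .
qed

lemma Phi_add: assumes "f \<in> End_mod NN" "g \<in> End_mod NN"
  shows "Phi (end_add NN f g) = end_add NN' (Phi f) (Phi g)"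
proof -
  obtain P1 P1' where s1: "stab NN P1" and f1: "f = endo NN P1" and e1: "mmul M' P1 = mmul P1' M'"
    and p1: "Phi f = endo NN' (adj P1')" using lift[OF assms(1)] by blast
  obtain P2 P2' where s2: "stab NN P2" and f2: "g = endo NN P2" and e2: "mmul M' P2 = mmul P2' M'"
    and p2: "Phi g = endo NN' (adj P2')" using lift[OF assms(2)] by blast
  have e: "mmul M' (madd P1 P2) = mmul (madd P1' P2') M'"
    by (simp add: mmul_madd madd_mmul e1 e2)
  have "Phi (end_add NN f g) = endo NN' (adj (madd P1' P2'))"
    unfolding f1 f2 endo_add[OF submod_range s1 s2]
    by (rule Phi_endo[OF stab_madd[OF submod_range s1 s2] e])
  also have "\<dots> = end_add NN' (Phi f) (Phi g)"
    unfolding p1 p2 adj_madd by (rule endo_add[OF submod_range stab_adj[OF e1] stab_adj[OF e2], symmetric])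
  finally show ?thesis .
qed

lemma Phi_smul: assumes "f \<in> End_mod NN"
  shows "Phi (end_smul NN r f) = end_smul NN' r (Phi f)"
proof -
  obtain P1 P1' where s1: "stab NN P1" and f1: "f = endo NN P1" and e1: "mmul M' P1 = mmul P1' M'"
    and p1: "Phi f = endo NN' (adj P1')" using lift[OF assms(1)] by blast
  have e: "mmul M' (msmul r P1) = mmul (msmul r P1') M'"
    by (simp add: mmul_msmul msmul_mmul e1)
  have "Phi (end_smul NN r f) = endo NN' (adj (msmul r P1'))"
    unfolding f1 endo_smul[OF submod_range s1]
    by (rule Phi_endo[OF stab_msmul[OF submod_range s1] e])
  also have "\<dots> = end_smul NN' r (Phi f)"
    unfolding p1 adj_msmul by (rule endo_smul[OF submod_range stab_adj[OF e1], symmetric])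
  finally show ?thesis .
qed

lemma Phi_id: "Phi (end_id NN) = end_id NN'"
proof -
  have e: "mmul M' mI = mmul mI M'" by (simp add: mmul_mI mI_mmul)
  have "Phi (end_id NN) = endo NN' (adj mI)"
    unfolding endo_id[OF submod_range TrueI] by (rule Phi_endo[OF stab_mI[OF submod_range] e])
  then show ?thesis by (simp add: adj_mI endo_id[OF submod_range TrueI])
qed

lemma iso: "end_op_iso NN NN'"
proof -
  interpret s: exm M' M by (rule sym)
  have b: "bij_betw Phi (End_mod NN) (End_mod NN')"
  proof (rule bij_betw_byWitness[where f'=s.Phi])
    show "\<forall>a\<in>End_mod NN. s.Phi (Phi a) = a" by (intro ballI Phi_inv)
    show "\<forall>a\<in>End_mod NN'. Phi (s.Phi a) = a" by (intro ballI s.Phi_inv)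
    show "Phi ` End_mod NN \<subseteq> End_mod NN'" by (intro image_subsetI Phi_in)
    show "s.Phi ` End_mod NN' \<subseteq> End_mod NN" by (intro image_subsetI s.Phi_in)
  qed
  show ?thesis unfolding end_op_iso_def
    apply (rule exI[of _ Phi])
    apply (intro conjI b ballI allI Phi_comp Phi_add Phi_smul Phi_id)
    by assumption+
qed

end


definition end_zero :: "('a::comm_ring_1 \<times> 'a) set \<Rightarrow> ('a cset \<Rightarrow> 'a cset)" where
  "end_zero N = end_smul N 0 (end_id N)"

definition idem_char :: "('a::comm_ring_1 \<times> 'a) set \<Rightarrow> bool" where
  "idem_char N \<longleftrightarrow> end_id N \<noteq> end_zero N \<and>
     (\<forall>e\<in>End_mod N. end_comp N e e = e \<longrightarrow> e = end_zero N \<or> e = end_id N)"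

context fixes N :: "('a::comm_ring_1 \<times> 'a) set" assumes sm: "submod N"
begin

lemma id_app: "end_id N (coset N v) = coset N v"
  by (simp add: end_id_def coset_in[OF sm])
lemma zero_app: "end_zero N (coset N v) = coset N 0"
  by (simp add: end_zero_def end_smul_def end_id_def coset_in[OF sm] csmul_coset[OF sm])
lemma zero_in: "end_zero N \<in> End_mod N"
  unfolding end_zero_def by (intro End_smul_closed[OF sm] End_id_in[OF sm])

lemma czero_eq: "czero N = coset N 0" by (simp add: czero_def)

lemma char1: assumes ind: "indecomposable N" shows "idem_char N"
  unfolding idem_char_def
proof (intro conjI ballI impI)
  show "end_id N \<noteq> end_zero N"
  proof
    assume h: "end_id N = end_zero N"
    have "coker N = {czero N}"
    proof (intro set_eqI iffI)
      fix S assume "S \<in> coker N"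
      then obtain v where v: "S = coset N v" using coker_iff[OF sm] by blast
      have "coset N v = coset N 0" using id_app[of v] zero_app[of v] h by simp
      then show "S \<in> {czero N}" using v czero_eq by simp
    next
      fix S assume "S \<in> {czero N}" then show "S \<in> coker N" by (simp add: czero_eq coset_in[OF sm])
    qed
    then show False using ind by (simp add: indecomposable_def)
  qed
next
  fix e assume eE: "e \<in> End_mod N" and idem: "end_comp N e e = e"
  obtain E where st: "stab N E" and eq: "e = endo N E" using End_lift[OF sm eE] by blast
  have ev: "e (coset N v) = coset N (app E v)" for v using eq endo_coset[OF sm st] by simp
  have EE: "app E (app E v) - app E v \<in> N" for v
  proof -
    have "end_comp N e e (coset N v) = e (coset N v)" using idem by simp
    then have "coset N (app E (app E v)) = coset N (app E v)"
      by (simp add: end_comp_def coset_in[OF sm] ev)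
    then show ?thesis using coset_eq[OF sm] by blast
  qed
  define P where "P = range (\<lambda>v. coset N (app E v))"
  define Q where "Q = range (\<lambda>v. coset N (v - app E v))"
  have cz: "czero N = coset N 0" by (rule czero_eq)
  have sP: "is_submod N P" unfolding is_submod_def
  proof (intro conjI ballI allI)
    show "P \<subseteq> coker N" unfolding P_def using coset_in[OF sm] by blast
    show "czero N \<in> P" unfolding P_def cz by (rule range_eqI[of _ _ 0]) simp
  next
    fix S T assume "S \<in> P" "T \<in> P"
    then obtain v w where "S = coset N (app E v)" "T = coset N (app E w)" unfolding P_def by blast
    then have "cadd N S T = coset N (app E (v + w))" by (simp add: cadd_coset[OF sm] app_add)
    then show "cadd N S T \<in> P" unfolding P_def by blast
  next
    fix r S assume "S \<in> P"
    then obtain v where "S = coset N (app E v)" unfolding P_def by blast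
    then have "csmul N r S = coset N (app E (vsmul r v))" by (simp add: csmul_coset[OF sm] app_vsmul)
    then show "csmul N r S \<in> P" unfolding P_def by blast
  qed
  have sQ: "is_submod N Q" unfolding is_submod_def
  proof (intro conjI ballI allI)
    show "Q \<subseteq> coker N" unfolding Q_def using coset_in[OF sm] by blast
    show "czero N \<in> Q" unfolding Q_def cz by (rule range_eqI[of _ _ 0]) simp
  next
    fix S T assume "S \<in> Q" "T \<in> Q"
    then obtain v w where "S = coset N (v - app E v)" "T = coset N (w - app E w)" unfolding Q_def by blast
    then have "cadd N S T = coset N ((v + w) - app E (v + w))" by (simp add: cadd_coset[OF sm] app_add algebra_simps)
    then show "cadd N S T \<in> Q" unfolding Q_def by blast
  next
    fix r S assume "S \<in> Q"
    then obtain v where "S = coset N (v - app E v)" unfolding Q_def by blast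
    then have "csmul N r S = coset N (vsmul r v - app E (vsmul r v))"
      by (simp add: csmul_coset[OF sm] app_vsmul vsmul_diff)
    then show "csmul N r S \<in> Q" unfolding Q_def by blast
  qed
  have int: "P \<inter> Q = {czero N}"
  proof (intro set_eqI iffI)
    fix S assume "S \<in> P \<inter> Q"
    then obtain v w where v: "S = coset N (app E v)" and w: "S = coset N (w - app E w)"
      unfolding P_def Q_def by blast
    have "e S = S" using v ev EE coset_eq[OF sm] by metis
    moreover have "e S = coset N (app E w - app E (app E w))" using w ev by (simp add: app_diff)
    moreover have "app E w - app E (app E w) - 0 \<in> N"
      using smneg[OF sm EE[of w]] by (simp add: algebra_simps)
    ultimately have "S = coset N 0" using coset_eq[OF sm] by metis
    then show "S \<in> {czero N}" by (simp add: cz)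
  next
    fix S assume "S \<in> {czero N}"
    then show "S \<in> P \<inter> Q" using sP sQ by (simp add: is_submod_def)
  qed
  have sum: "{cadd N S T | S T. S \<in> P \<and> T \<in> Q} = coker N"
  proof (intro set_eqI iffI)
    fix X assume "X \<in> {cadd N S T | S T. S \<in> P \<and> T \<in> Q}"
    then obtain v w where "X = cadd N (coset N (app E v)) (coset N (w - app E w))"
      unfolding P_def Q_def by blast
    then show "X \<in> coker N" by (simp add: cadd_coset[OF sm] coset_in[OF sm])
  next
    fix X assume "X \<in> coker N"
    then obtain v where v: "X = coset N v" using coker_iff[OF sm] by blast
    have "X = cadd N (coset N (app E v)) (coset N (v - app E v))"
      by (simp add: v cadd_coset[OF sm])
    moreover have "coset N (app E v) \<in> P" "coset N (v - app E v) \<in> Q" unfolding P_def Q_def by auto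
    ultimately show "X \<in> {cadd N S T | S T. S \<in> P \<and> T \<in> Q}" by blast
  qed
  have "P = {czero N} \<or> Q = {czero N}"
    using ind sP sQ int sum unfolding indecomposable_def by blast
  then show "e = end_zero N \<or> e = end_id N"
  proof
    assume "P = {czero N}"
    then have "coset N (app E v) = coset N 0" for v unfolding P_def cz by blast
    then have "e = end_zero N"
      by (intro End_ext[OF sm eE zero_in]) (simp add: ev zero_app)
    then show ?thesis ..
  next
    assume "Q = {czero N}"
    then have "coset N (v - app E v) = coset N 0" for v unfolding Q_def cz by blast
    then have "coset N (app E v) = coset N v" for v using coset_eq[OF sm] smneg[OF sm]
      by (metis diff_zero minus_diff_eq)
    then have "e = end_id N"
      by (intro End_ext[OF sm eE End_id_in[OF sm]]) (simp add: ev id_app)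
    then show ?thesis ..
  qed
qed

end


context fixes N :: "('a::comm_ring_1 \<times> 'a) set" assumes sm: "submod N"
begin

lemma char2: assumes ch: "idem_char N" shows "indecomposable N"
  unfolding indecomposable_def
proof (intro conjI allI impI)
  have cz: "czero N = coset N 0" by (simp add: czero_def)
  show "coker N \<noteq> {czero N}"
  proof
    assume h: "coker N = {czero N}"
    have "end_id N = end_zero N"
    proof (rule End_ext[OF sm End_id_in[OF sm] zero_in[OF sm]])
      fix v have "coset N v = coset N 0" using h cz coset_in[OF sm, of v] by blast
      then show "end_id N (coset N v) = end_zero N (coset N v)" by (simp add: id_app[OF sm] zero_app[OF sm])
    qed
    then show False using ch by (simp add: idem_char_def)
  qed
next
  fix P Q assume h: "is_submod N P \<and> is_submod N Q \<and> P \<inter> Q = {czero N}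
            \<and> {cadd N S T | S T. S \<in> P \<and> T \<in> Q} = coker N"
  have cz: "czero N = coset N 0" by (simp add: czero_def)
  have sP: "is_submod N P" and sQ: "is_submod N Q" and int: "P \<inter> Q = {czero N}"
    and sum: "{cadd N S T | S T. S \<in> P \<and> T \<in> Q} = coker N" using h by auto
  have Pc: "P \<subseteq> coker N" "Q \<subseteq> coker N" using sP sQ by (auto simp: is_submod_def)
  have Padd: "cadd N S T \<in> P" if "S \<in> P" "T \<in> P" for S T using sP that by (simp add: is_submod_def)
  have Psm: "csmul N r S \<in> P" if "S \<in> P" for r S using sP that by (simp add: is_submod_def)
  have Qadd: "cadd N S T \<in> Q" if "S \<in> Q" "T \<in> Q" for S T using sQ that by (simp add: is_submod_def)
  have Qsm: "csmul N r S \<in> Q" if "S \<in> Q" for r S using sQ that by (simp add: is_submod_def)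
  have dec: "\<exists>u w. coset N u \<in> P \<and> coset N w \<in> Q \<and> coset N z = coset N (u + w)" for z
  proof -
    have "coset N z \<in> {cadd N S T | S T. S \<in> P \<and> T \<in> Q}" using sum coset_in[OF sm] by simp
    then obtain S T where ST: "coset N z = cadd N S T" "S \<in> P" "T \<in> Q" by blast
    obtain u where u: "S = coset N u" using ST(2) Pc coker_iff[OF sm] by blast
    obtain w where w: "T = coset N w" using ST(3) Pc coker_iff[OF sm] by blast
    have "coset N z = coset N (u + w)" using ST u w by (simp add: cadd_coset[OF sm])
    then show ?thesis using ST u w by blast
  qed
  obtain u1 w1 where d1: "coset N u1 \<in> P" "coset N w1 \<in> Q" "coset N (1,0) = coset N (u1 + w1)"
    using dec by blast
  obtain u2 w2 where d2: "coset N u2 \<in> P" "coset N w2 \<in> Q" "coset N (0,1) = coset N (u2 + w2)"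
    using dec by blast
  define E where "E = M2 (fst u1) (fst u2) (snd u1) (snd u2)"
  define W where "W = M2 (fst w1) (fst w2) (snd w1) (snd w2)"
  have Ev: "app E v = vsmul (fst v) u1 + vsmul (snd v) u2" for v
    by (simp add: E_def vsmul_def algebra_simps)
  have Wv: "app W v = vsmul (fst v) w1 + vsmul (snd v) w2" for v
    by (simp add: W_def vsmul_def algebra_simps)
  have PE: "coset N (app E v) \<in> P" for v
    using Padd[OF Psm[OF d1(1)] Psm[OF d2(1)]] by (simp add: Ev csmul_coset[OF sm] cadd_coset[OF sm])
  have QW: "coset N (app W v) \<in> Q" for v
    using Qadd[OF Qsm[OF d1(2)] Qsm[OF d2(2)]] by (simp add: Wv csmul_coset[OF sm] cadd_coset[OF sm])
  have sEW: "coset N v = coset N (app E v + app W v)" for v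
  proof -
    have v: "v = vsmul (fst v) (1,0) + vsmul (snd v) (0,1)" by (simp add: vsmul_def)
    have "coset N v = cadd N (csmul N (fst v) (coset N (1,0))) (csmul N (snd v) (coset N (0,1)))"
      by (subst v) (simp add: csmul_coset[OF sm] cadd_coset[OF sm])
    also have "\<dots> = cadd N (csmul N (fst v) (coset N (u1 + w1))) (csmul N (snd v) (coset N (u2 + w2)))"
      using d1 d2 by simp
    also have "\<dots> = coset N (app E v + app W v)"
      by (simp add: csmul_coset[OF sm] cadd_coset[OF sm] Ev Wv vsmul_add algebra_simps)
    finally show ?thesis .
  qed
  have U: "coset N a = coset N 0" if a: "coset N a \<in> P" and b: "coset N b \<in> Q"
    and ab: "coset N (a + b) = coset N 0" for a b
  proof -
    have "a + b \<in> N" using ab coset_eq[OF sm] by simp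
    then have "coset N a = coset N (vsmul (-1) b)" using coset_eq[OF sm] by (simp add: vsmul_m1)
    then have "coset N a \<in> Q" using Qsm[OF b, of "-1"] by (simp add: csmul_coset[OF sm])
    then have "coset N a \<in> P \<inter> Q" using a by blast
    then show ?thesis using int cz by simp
  qed
  have st: "stab N E" unfolding stab_def
  proof
    fix n assume "n \<in> N"
    then have "coset N n = coset N 0" using coset_eq[OF sm] by simp
    then have "coset N (app E n + app W n) = coset N 0" using sEW[of n] by simp
    then have "coset N (app E n) = coset N 0" using U PE QW by blast
    then show "app E n \<in> N" using coset_eq[OF sm] by simp
  qed
  define e where "e = endo N E"
  have eE: "e \<in> End_mod N" unfolding e_def by (rule endo_in[OF sm st])
  have ev: "e (coset N v) = coset N (app E v)" for v unfolding e_def by (rule endo_coset[OF sm st])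
  have idem: "end_comp N e e = e"
  proof -
    have "app (mmul E E) v - app E v \<in> N" for v
    proof -
      define u where "u = app E v"
      have c1: "coset N (app E u - u) \<in> P"
      proof -
        have "cadd N (coset N (app E u)) (csmul N (-1) (coset N u)) \<in> P"
          using Padd[OF PE Psm[OF PE]] u_def by simp
        then show ?thesis by (simp add: cadd_coset[OF sm] csmul_coset[OF sm] vsmul_m1)
      qed
      have "(app E u + app W u) - u \<in> N" using sEW[of u] coset_eq[OF sm] by metis
      then have "coset N ((app E u - u) + app W u) = coset N 0" using coset_eq[OF sm]
        by (simp add: algebra_simps)
      then have "coset N (app E u - u) = coset N 0" using U[OF c1 QW] by blast
      then show ?thesis using coset_eq[OF sm] by (simp add: u_def app_mmul)
    qed
    then show ?thesis unfolding e_def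
      by (simp add: endo_comp[OF sm st st] endo_eq[OF sm stab_mmul[OF sm st st] st])
  qed
  have "e = end_zero N \<or> e = end_id N" using ch eE idem by (simp add: idem_char_def)
  then show "P = {czero N} \<or> Q = {czero N}"
  proof
    assume ez: "e = end_zero N"
    have "P = {czero N}"
    proof (intro set_eqI iffI)
      fix S assume "S \<in> P"
      then obtain s where s: "S = coset N s" using Pc coker_iff[OF sm] by blast
      have "coset N (app E s) = coset N 0" using ev[of s] ez zero_app[OF sm] by simp
      then have "app E s \<in> N" using coset_eq[OF sm] by simp
      moreover have "s - (app E s + app W s) \<in> N" using sEW[of s] coset_eq[OF sm] by metis
      ultimately have "(s - (app E s + app W s)) + app E s \<in> N" using smadd[OF sm] by blast
      then have "coset N s = coset N (app W s)" using coset_eq[OF sm] by (simp add: algebra_simps)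
      then have "S \<in> P \<inter> Q" using QW s \<open>S \<in> P\<close> by simp
      then show "S \<in> {czero N}" using int by simp
    next
      fix S assume "S \<in> {czero N}" then show "S \<in> P" using sP by (simp add: is_submod_def)
    qed
    then show ?thesis ..
  next
    assume ei: "e = end_id N"
    have "Q = {czero N}"
    proof (intro set_eqI iffI)
      fix S assume "S \<in> Q"
      then obtain t where t: "S = coset N t" using Pc coker_iff[OF sm] by blast
      have "coset N (app E t) = coset N t" using ev[of t] ei id_app[OF sm] by simp
      then have "S \<in> P \<inter> Q" using PE[of t] t \<open>S \<in> Q\<close> by simp
      then show "S \<in> {czero N}" using int by simp
    next
      fix S assume "S \<in> {czero N}" then show "S \<in> Q" using sQ by (simp add: is_submod_def)
    qed
    then show ?thesis ..
  qed
qed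

end

lemma transfer: assumes sN: "submod N" and sN': "submod N'" and iso: "end_op_iso N N'"
  and ch: "idem_char N" shows "idem_char N'"
proof -
  obtain \<Phi> where b: "bij_betw \<Phi> (End_mod N) (End_mod N')"
    and c: "\<forall>f\<in>End_mod N. \<forall>g\<in>End_mod N. \<Phi> (end_comp N f g) = end_comp N' (\<Phi> g) (\<Phi> f)"
    and s: "\<forall>r. \<forall>f\<in>End_mod N. \<Phi> (end_smul N r f) = end_smul N' r (\<Phi> f)"
    and i: "\<Phi> (end_id N) = end_id N'"
    using iso unfolding end_op_iso_def by blast
  have inj: "inj_on \<Phi> (End_mod N)" using b by (simp add: bij_betw_def)
  have im: "\<Phi> ` End_mod N = End_mod N'" using b by (simp add: bij_betw_def)
  have z: "\<Phi> (end_zero N) = end_zero N'"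
    unfolding end_zero_def using s End_id_in[OF sN] i by simp
  show ?thesis unfolding idem_char_def
  proof (intro conjI ballI impI)
    show "end_id N' \<noteq> end_zero N'"
    proof
      assume "end_id N' = end_zero N'"
      then have "\<Phi> (end_id N) = \<Phi> (end_zero N)" using i z by simp
      then have "end_id N = end_zero N" using inj End_id_in[OF sN] zero_in[OF sN]
        by (meson inj_on_def)
      then show False using ch by (simp add: idem_char_def)
    qed
  next
    fix e' assume e'E: "e' \<in> End_mod N'" and idem: "end_comp N' e' e' = e'"
    obtain e where eE: "e \<in> End_mod N" and ee: "e' = \<Phi> e" using e'E im by blast
    have "\<Phi> (end_comp N e e) = \<Phi> e" using c eE idem ee by simp
    then have "end_comp N e e = e"
      using inj End_comp_closed[OF sN eE eE] eE by (meson inj_on_def)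
    then have "e = end_zero N \<or> e = end_id N" using ch eE by (simp add: idem_char_def)
    then show "e' = end_zero N' \<or> e' = end_id N'" using ee z i by auto
  qed
qed


lemma ind_iff: "submod N \<Longrightarrow> indecomposable N \<longleftrightarrow> idem_char N"
  using char1 char2 by blast

theorem corollary4p3:
  fixes x y a :: "'a::comm_ring_1"
  assumes "noetherian_ring TYPE('a)"
    and "local_ring TYPE('a)"
    and "exact_pair x y"
  shows "end_op_iso (G_mod x y a) (H_mod x y a)
     \<and> (indecomposable (G_mod x y a) \<longleftrightarrow> indecomposable (H_mod x y a))"
proof -
  have ax: "Ann x = principal_ideal y" and ay: "Ann y = principal_ideal x"
    using assms(3) by (auto simp: exact_pair_def)
  have yx: "y * x = 0"
  proof -
    have "y \<in> principal_ideal y" unfolding principal_ideal_def by (rule CollectI, rule exI[of _ 1]) simp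
    then have "y \<in> Ann x" using ax by simp
    then show ?thesis by (simp add: Ann_def)
  qed
  have annx: "\<exists>r. t = r * y" if "t * x = 0" for t
  proof -
    have "t \<in> Ann x" using that by (simp add: Ann_def)
    then show ?thesis using ax by (auto simp: principal_ideal_def)
  qed
  have anny: "\<exists>r. t = r * x" if "t * y = 0" for t
  proof -
    have "t \<in> Ann y" using that by (simp add: Ann_def)
    then show ?thesis using ay by (auto simp: principal_ideal_def)
  qed
  define M where "M = M2 x a 0 y"
  define M' where "M' = M2 y (-a) 0 x"
  interpret e: exm M M'
  proof
    show "mmul M M' = m0" "mmul M' M = m0" using yx
      by (simp_all add: M_def M'_def m0_def algebra_simps)
    show "adj M = M'" by (simp add: M_def M'_def)
  next
    fix v :: "'a \<times> 'a" assume h: "app M v = 0"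
    obtain u t where v: "v = (u, t)" by (cases v)
    have "t * y = 0" using h by (simp add: M_def v zero_prod_def algebra_simps)
    then obtain r where r: "t = r * x" using anny by blast
    have "x * u + a * t = 0" using h by (simp add: M_def v zero_prod_def)
    then have "(u + a * r) * x = 0" using r by (simp add: algebra_simps)
    then obtain s where s: "u + a * r = s * y" using annx by blast
    have "v = app M' (s, r)" using s r by (simp add: M'_def v algebra_simps)
    then show "\<exists>w. v = app M' w" ..
  next
    fix v :: "'a \<times> 'a" assume h: "app M' v = 0"
    obtain u t where v: "v = (u, t)" by (cases v)
    have "t * x = 0" using h by (simp add: M'_def v zero_prod_def algebra_simps)
    then obtain r where r: "t = r * y" using annx by blast
    have "y * u - a * t = 0" using h by (simp add: M'_def v zero_prod_def)
    then have "(u - a * r) * y = 0" using r by (simp add: algebra_simps)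
    then obtain s where s: "u - a * r = s * x" using anny by blast
    have "v = app M (s, r)" using s r by (simp add: M_def v algebra_simps)
    then show "\<exists>w. v = app M w" ..
  qed
  interpret s: exm M' M by (rule e.sym)
  have G: "G_mod x y a = range (app M)"
    unfolding G_mod_def by (rule arg_cong[of _ _ range]) (auto simp: gamma_map_def M_def)
  have H: "H_mod x y a = range (app M')"
    unfolding H_mod_def by (rule arg_cong[of _ _ range]) (auto simp: eta_map_def M'_def)
  have i1: "end_op_iso (range (app M)) (range (app M'))" by (rule e.iso)
  have i2: "end_op_iso (range (app M')) (range (app M))" by (rule s.iso)
  show ?thesis
    unfolding G H
    using i1 transfer[OF submod_range submod_range i1] transfer[OF submod_range submod_range i2]
      ind_iff[OF submod_range[of M]] ind_iff[OF submod_range[of M']] by blast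
qed


end
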